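(* Let $n\ge 2$ and let $S=\{A_1,\dots,A_m\}$ be a finite set of real $n\times n$ matrices such that every $A\in S$ satisfies $A\mathbf{1}=\mathbf{1}$ and $\|Ax\|_{\mathcal{P}}\le\|x\|_{\mathcal{P}}$ for all $x\in\mathbb{R}^n$. Consider the switched system $x(t+1)=A_{\sigma(t)}x(t)$, $x(0)=x_0$, with $\sigma:\mathbb{N}\to\{1,\dots,m\}$. Then the following are equivalent: (i) there exist $x_0\in\mathbb{R}^n$ and $\sigma$ such that $x(t)$ does not converge to a multiple of $\mathbf{1}$; (ii) there exist a proper open face $F$ of $\mathcal{P}$, a sequence $\sigma$ and an integer $k$ with $1\le k\le N$ such that $A_{\sigma(k-1)}\cdots A_{\sigma(0)}F\subseteq F\cup(-F)$, where $N=\tfrac12(3^n-2^{n+1}+1)$.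
   Context: $\mathbf{1}=(1,\dots,1)^\top\in\mathbb{R}^n$. The seminorm is $\|x\|_{\mathcal{P}}=\tfrac12(\max_i x_i-\min_i x_i)$ and $\mathcal{P}=\{x:\|x\|_{\mathcal{P}}\le 1\}$, a polyhedron with $\mathcal{P}=-\mathcal{P}$. A face of a polyhedron $\mathcal{Q}$ is a non-empty subset $F$ with $F=\mathcal{Q}$ or $F=\mathcal{Q}\cap\{x:b^\top x=c\}$ where $b^\top x\le c$ on $\mathcal{Q}$; a proper face is a face other than $\mathcal{Q}$; an open face is the relative interior of a face. $N$ is the number of pairs $\{F,-F\}$ of opposite proper open faces of $\mathcal{P}$. *)

theory Defs
  imports "HOL-Analysis.Analysis"
begin

definition pnorm :: "real^'n \<Rightarrow> real" where
  "pnorm x = (Max (range (\<lambda>i. x $ i)) - Min (range (\<lambda>i. x $ i))) / 2"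

definition Pball :: "(real^'n) set" where
  "Pball = {x. pnorm x \<le> 1}"

definition is_face :: "'a::euclidean_space set \<Rightarrow> 'a set \<Rightarrow> bool" where
  "is_face F Q \<longleftrightarrow> F \<noteq> {} \<and>
     (F = Q \<or> (\<exists>b c. (\<forall>x\<in>Q. b \<bullet> x \<le> c) \<and> F = Q \<inter> {x. b \<bullet> x = c}))"

primrec traj :: "(nat \<Rightarrow> real^'n^'n) \<Rightarrow> real^'n \<Rightarrow> nat \<Rightarrow> real^'n" where
  "traj \<sigma> x0 0 = x0"
| "traj \<sigma> x0 (Suc t) = \<sigma> t *v traj \<sigma> x0 t"

end

theory Submission
  imports Defs
begin



lemma pnorm_diff_le: "x$i - x$j \<le> 2 * pnorm (x::real^'n)"
proof -
  have f: "finite (range (\<lambda>i. x$i))" by simp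
  have "x$i \<le> Max (range (\<lambda>i. x$i))" using f by (intro Max_ge) auto
  moreover have "Min (range (\<lambda>i. x$i)) \<le> x$j" using f by (intro Min_le) auto
  ultimately show ?thesis unfolding pnorm_def by (simp; linarith)
qed

lemma pnorm_attain: "\<exists>i j. x$i - x$j = 2 * pnorm (x::real^'n)"
proof -
  have f: "finite (range (\<lambda>i. x$i))" by simp
  have "Max (range (\<lambda>i. x$i)) \<in> range (\<lambda>i. x$i)" using f by (intro Max_in) auto
  then obtain i where i: "Max (range (\<lambda>i. x$i)) = x$i" by (metis imageE)
  have "Min (range (\<lambda>i. x$i)) \<in> range (\<lambda>i. x$i)" using f by (intro Min_in) auto
  then obtain j where j: "Min (range (\<lambda>i. x$i)) = x$j" by (metis imageE)
  show ?thesis unfolding pnorm_def by (intro exI[of _ i] exI[of _ j]) (simp add: i j)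
qed

lemma pnorm_nonneg: "0 \<le> pnorm (x::real^'n)"
  using pnorm_diff_le[of x undefined undefined] by simp

lemma pnorm_le_iff: "pnorm (x::real^'n) \<le> r \<longleftrightarrow> (\<forall>i j. x$i - x$j \<le> 2*r)"
proof
  assume "pnorm x \<le> r"
  then show "\<forall>i j. x$i - x$j \<le> 2*r" using pnorm_diff_le[of x] by (meson mult_left_mono order_trans zero_le_numeral)
next
  assume H: "\<forall>i j. x$i - x$j \<le> 2*r"
  obtain i j where "x$i - x$j = 2 * pnorm x" using pnorm_attain by blast
  with H[rule_format, of i j] show "pnorm x \<le> r" by linarith
qed

lemma pnorm_eqI: "(\<And>i j. (x::real^'n)$i - x$j \<le> 2*r) \<Longrightarrow> x$i0 - x$j0 = 2*r \<Longrightarrow> pnorm x = r"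
proof -
  assume H: "\<And>i j. (x::real^'n)$i - x$j \<le> 2*r" and E: "x$i0 - x$j0 = 2*r"
  obtain i j where "x$i - x$j = 2 * pnorm x" using pnorm_attain by blast
  with H[of i j] E pnorm_diff_le[of x i0 j0] show ?thesis by linarith
qed

lemma pnorm_triangle: "pnorm (x + y) \<le> pnorm x + pnorm (y::real^'n)"
  unfolding pnorm_le_iff
proof (intro allI)
  fix i j
  show "(x + y) $ i - (x + y) $ j \<le> 2 * (pnorm x + pnorm y)"
    using pnorm_diff_le[of x i j] pnorm_diff_le[of y i j] by simp
qed

lemma pnorm_scale: "pnorm (c *\<^sub>R (x::real^'n)) = \<bar>c\<bar> * pnorm x"
proof -
  obtain i j where ij: "x$i - x$j = 2 * pnorm x" using pnorm_attain by blast
  show ?thesis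
  proof (cases "c \<ge> 0")
    case True
    show ?thesis
    proof (rule pnorm_eqI[of _ _ i j])
      fix k l show "(c *\<^sub>R x)$k - (c *\<^sub>R x)$l \<le> 2 * (\<bar>c\<bar> * pnorm x)"
        using mult_left_mono[OF pnorm_diff_le[of x k l] True] True by (simp add: algebra_simps)
    qed (use ij True in \<open>simp add: algebra_simps\<close>)
  next
    case False
    show ?thesis
    proof (rule pnorm_eqI[of _ _ j i])
      fix k l show "(c *\<^sub>R x)$k - (c *\<^sub>R x)$l \<le> 2 * (\<bar>c\<bar> * pnorm x)"
        using mult_left_mono[OF pnorm_diff_le[of x l k], of "-c"] False by (simp add: algebra_simps)
    qed (use ij False in \<open>simp add: algebra_simps\<close>)
  qed
qed

lemma pnorm_neg: "pnorm (- (x::real^'n)) = pnorm x"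
  using pnorm_scale[of "-1" x] by simp

lemma pnorm_shift: "pnorm ((x::real^'n) + c *\<^sub>R vec 1) = pnorm x"
proof -
  obtain i j where ij: "x$i - x$j = 2 * pnorm x" using pnorm_attain by blast
  show ?thesis by (rule pnorm_eqI[of _ _ i j]) (use ij pnorm_diff_le[of x] in auto)
qed

lemma pnorm_const: "pnorm (c *\<^sub>R vec 1 :: real^'n) = 0"
  by (rule pnorm_eqI[of _ _ undefined undefined]) auto

lemma pnorm_le_norm: "pnorm (x::real^'n) \<le> norm x"
  unfolding pnorm_le_iff
proof (intro allI)
  fix i j
  show "x$i - x$j \<le> 2 * norm x"
    using component_le_norm_cart[of x i] component_le_norm_cart[of x j] by linarith
qed

lemma pnorm_lip: "\<bar>pnorm (x::real^'n) - pnorm y\<bar> \<le> norm (x - y)"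
proof -
  have "pnorm x \<le> pnorm (x - y) + pnorm y" using pnorm_triangle[of "x - y" y] by simp
  moreover have "pnorm y \<le> pnorm (y - x) + pnorm x" using pnorm_triangle[of "y - x" x] by simp
  moreover have "pnorm (x - y) \<le> norm (x - y)" by (rule pnorm_le_norm)
  moreover have "pnorm (y - x) \<le> norm (x - y)" using pnorm_le_norm[of "y - x"] by (simp add: norm_minus_commute)
  ultimately show ?thesis by linarith
qed

lemma pnorm_cont: "continuous_on UNIV (pnorm :: real^'n \<Rightarrow> real)"
  unfolding continuous_on_iff
proof (intro ballI allI impI)
  fix x :: "real^'n" and e :: real assume "0 < e"
  show "\<exists>d>0. \<forall>x'\<in>UNIV. dist x' x < d \<longrightarrow> dist (pnorm x') (pnorm x) < e"
    using pnorm_lip \<open>0 < e\<close> by (intro exI[of _ e]) (auto simp: dist_norm dist_real_def intro: le_less_trans)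
qed

lemma pnorm_tendsto: "X \<longlonglongrightarrow> (y::real^'n) \<Longrightarrow> (\<lambda>n. pnorm (X n)) \<longlonglongrightarrow> pnorm y"
  using continuous_on_tendsto_compose[OF pnorm_cont, of X y sequentially] by simp




definition amx :: "real^'n \<Rightarrow> 'n set" where "amx x = {i. \<exists>j. x$i - x$j = 2}"
definition amn :: "real^'n \<Rightarrow> 'n set" where "amn x = {j. \<exists>i. x$i - x$j = 2}"
definition OF :: "'n set \<Rightarrow> 'n set \<Rightarrow> (real^'n) set" where
  "OF I J = {x. pnorm x = 1 \<and> amx x = I \<and> amn x = J}"
definition CF :: "'n set \<Rightarrow> 'n set \<Rightarrow> (real^'n) set" where
  "CF I J = {x. pnorm x \<le> 1 \<and> (\<forall>i\<in>I. \<forall>j\<in>J. x$i - x$j = 2)}"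
definition types :: "('n set \<times> 'n set) set" where
  "types = {(I,J). I \<noteq> {} \<and> J \<noteq> {} \<and> I \<inter> J = {}}"

lemma diff2_iff: "pnorm (x::real^'n) = 1 \<Longrightarrow> x$i - x$j = 2 \<longleftrightarrow> i \<in> amx x \<and> j \<in> amn x"
proof
  assume "pnorm x = 1" "i \<in> amx x \<and> j \<in> amn x"
  then obtain j' i' where "x$i - x$j' = 2" "x$i' - x$j = 2" unfolding amx_def amn_def by auto
  with pnorm_diff_le[of x i j] pnorm_diff_le[of x i' j'] \<open>pnorm x = 1\<close> show "x$i - x$j = 2" by linarith
qed (auto simp: amx_def amn_def)

lemma type_in: "pnorm (x::real^'n) = 1 \<Longrightarrow> (amx x, amn x) \<in> types"
proof -
  assume p: "pnorm x = 1"
  obtain i j where ij: "x$i - x$j = 2" using pnorm_attain[of x] p by auto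
  have "amx x \<inter> amn x = {}"
  proof (rule ccontr)
    assume "amx x \<inter> amn x \<noteq> {}"
    then obtain k where "k \<in> amx x" "k \<in> amn x" by auto
    then have "x$k - x$k = 2" using diff2_iff[OF p] by blast
    then show False by simp
  qed
  moreover have "i \<in> amx x" "j \<in> amn x" using ij unfolding amx_def amn_def by auto
  ultimately show ?thesis unfolding types_def by auto
qed

lemma amx_neg: "amx (- x) = amn (x::real^'n)" and amn_neg: "amn (- x) = amx (x::real^'n)"
  unfolding amx_def amn_def by (auto; smt (verit))+

lemma OF_neg: "x \<in> OF I J \<Longrightarrow> - x \<in> OF J I"
  unfolding OF_def by (simp add: pnorm_neg amx_neg amn_neg)

lemma convex_CF: "convex (CF I J :: (real^'n) set)"
proof (unfold convex_def, intro ballI allI impI)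
  fix x y :: "real^'n" and u v :: real
  assume x: "x \<in> CF I J" and y: "y \<in> CF I J" and uv: "0 \<le> u" "0 \<le> v" "u + v = 1"
  have e: "\<And>i j. (u *\<^sub>R x + v *\<^sub>R y) $ i - (u *\<^sub>R x + v *\<^sub>R y) $ j = u * (x$i - x$j) + v * (y$i - y$j)"
    by (simp add: algebra_simps)
  show "u *\<^sub>R x + v *\<^sub>R y \<in> CF I J" unfolding CF_def pnorm_le_iff
  proof (intro CollectI conjI allI ballI)
    fix i j
    have "u * (x$i - x$j) \<le> u * 2" using x uv unfolding CF_def pnorm_le_iff by (intro mult_left_mono) auto
    moreover have "v * (y$i - y$j) \<le> v * 2" using y uv unfolding CF_def pnorm_le_iff by (intro mult_left_mono) auto
    ultimately show "(u *\<^sub>R x + v *\<^sub>R y) $ i - (u *\<^sub>R x + v *\<^sub>R y) $ j \<le> 2 * 1"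
      using e[of i j] uv by linarith
  next
    fix i j assume ij: "i \<in> I" "j \<in> J"
    then show "(u *\<^sub>R x + v *\<^sub>R y) $ i - (u *\<^sub>R x + v *\<^sub>R y) $ j = 2"
      using e[of i j] x y uv unfolding CF_def by (simp add: distrib_left[symmetric])
  qed
qed

definition yI :: "'n set \<Rightarrow> real^'n" where "yI I = (\<chi> l. if l \<in> I then 1 else -1)"

lemma yI_CF: "I \<inter> J = {} \<Longrightarrow> yI I \<in> CF I J"
  unfolding CF_def pnorm_le_iff yI_def by auto

lemma CF_ne: "(I,J) \<in> types \<Longrightarrow> CF I J \<noteq> {}"
  using yI_CF unfolding types_def by auto

lemma ri_CF_sub: assumes t: "(I,J) \<in> types" shows "rel_interior (CF I J) \<subseteq> OF I J"
proof
  fix z assume zri: "z \<in> rel_interior (CF I J)"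
  have ne: "I \<noteq> {}" "J \<noteq> {}" and dis: "I \<inter> J = {}" using t unfolding types_def by auto
  have riff: "\<And>x. x \<in> CF I J \<Longrightarrow> \<exists>e>1. (1 - e) *\<^sub>R x + e *\<^sub>R z \<in> CF I J"
    using zri convex_rel_interior_iff[OF convex_CF CF_ne[OF t]] by blast
  have zC: "z \<in> CF I J" using zri rel_interior_subset by blast
  obtain i0 where i0: "i0 \<in> I" using ne by auto
  obtain j0 where j0: "j0 \<in> J" using ne by auto
  have d0: "z$i0 - z$j0 = 2" using zC i0 j0 unfolding CF_def by auto
  have p: "pnorm z = 1" using zC d0 pnorm_diff_le[of z i0 j0] unfolding CF_def by auto
  have Isub: "I \<subseteq> amx z" using zC j0 unfolding CF_def amx_def by auto
  have Jsub: "J \<subseteq> amn z" using zC i0 unfolding CF_def amn_def by auto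
  have "amx z \<subseteq> I"
  proof
    fix k assume k: "k \<in> amx z"
    show "k \<in> I"
    proof (rule ccontr)
      assume kI: "k \<notin> I"
      have dk: "z$k - z$j0 = 2" using diff2_iff[OF p] k Jsub j0 by auto
      obtain e where e: "e > 1" "(1 - e) *\<^sub>R yI I + e *\<^sub>R z \<in> CF I J" using riff[OF yI_CF[OF dis]] by blast
      define w where "w = (1 - e) *\<^sub>R yI I + e *\<^sub>R z"
      have "w$k - w$j0 = 2 * e" using dk kI j0 dis unfolding w_def yI_def by (auto simp: algebra_simps)
      moreover have "w$k - w$j0 \<le> 2" using e(2) pnorm_diff_le[of w k j0] unfolding w_def CF_def by auto
      ultimately show False using e(1) by simp
    qed
  qed
  moreover have "amn z \<subseteq> J"
  proof
    fix k assume k: "k \<in> amn z"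
    show "k \<in> J"
    proof (rule ccontr)
      assume kJ: "k \<notin> J"
      have dk: "z$i0 - z$k = 2" using diff2_iff[OF p] k Isub i0 by auto
      have "- yI J \<in> CF I J" using dis unfolding CF_def pnorm_le_iff yI_def by auto
      then obtain e where e: "e > 1" "(1 - e) *\<^sub>R (- yI J) + e *\<^sub>R z \<in> CF I J"
        using riff by blast
      define w where "w = (1 - e) *\<^sub>R (- yI J) + e *\<^sub>R z"
      have "w$i0 - w$k = 2 * e" using dk kJ i0 dis unfolding w_def yI_def by (auto simp: algebra_simps)
      moreover have "w$i0 - w$k \<le> 2" using e(2) pnorm_diff_le[of w i0 k] unfolding w_def CF_def by auto
      ultimately show False using e(1) by simp
    qed
  qed
  ultimately show "z \<in> OF I J" using Isub Jsub p unfolding OF_def by auto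
qed




lemma OF_CF: assumes "z \<in> OF I J" shows "z \<in> CF I J"
  using assms diff2_iff unfolding OF_def CF_def by auto

lemma OF_sub_ri: assumes t: "(I,J) \<in> types" shows "OF I J \<subseteq> rel_interior (CF I J :: (real^'n) set)"
proof
  fix z :: "real^'n" assume z: "z \<in> OF I J"
  have zC: "z \<in> CF I J" using OF_CF[OF z] .
  have p: "pnorm z = 1" and zI: "amx z = I" and zJ: "amn z = J" using z unfolding OF_def by auto
  define D where "D = {p::'n\<times>'n. z$fst p - z$snd p \<noteq> 2}"
  define \<delta> where "\<delta> = Min ((\<lambda>p. 2 - (z$fst p - z$snd p)) ` D)"
  have finD: "finite D" by simp
  have "(undefined, undefined) \<in> D" unfolding D_def by simp
  then have neD: "D \<noteq> {}" by blast
  have dpos: "\<delta> > 0" unfolding \<delta>_def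
  proof (subst Min_gr_iff)
    show "finite ((\<lambda>p. 2 - (z$fst p - z$snd p)) ` D)" using finD by simp
    show "(\<lambda>p. 2 - (z$fst p - z$snd p)) ` D \<noteq> {}" using neD by simp
    show "\<forall>a\<in>(\<lambda>p. 2 - (z $ fst p - z $ snd p)) ` D. 0 < a"
      using pnorm_diff_le[of z] p unfolding D_def by (auto simp: order_le_less)
  qed
  have dle: "\<delta> \<le> 2 - (z$k - z$l)" if kl: "z$k - z$l \<noteq> 2" for k l
  proof -
    have "(k,l) \<in> D" unfolding D_def using kl by simp
    then have "2 - (z$k - z$l) \<in> (\<lambda>p. 2 - (z$fst p - z$snd p)) ` D" by (rule rev_image_eqI) simp
    then show ?thesis unfolding \<delta>_def using finD by (intro Min_le) auto
  qed
  have "\<forall>y\<in>CF I J. \<exists>e>1. (1 - e) *\<^sub>R y + e *\<^sub>R z \<in> CF I J"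
  proof
    fix y assume y: "y \<in> CF I J"
    define e where "e = 1 + \<delta>/4"
    define w where "w = (1 - e) *\<^sub>R y + e *\<^sub>R z"
    have wd: "\<And>k l. w$k - w$l = (z$k - z$l) + (\<delta>/4) * ((z$k - z$l) - (y$k - y$l))"
      unfolding w_def e_def by (simp add: algebra_simps)
    have yI: "\<And>i j. i \<in> I \<Longrightarrow> j \<in> J \<Longrightarrow> y$i - y$j = 2" using y unfolding CF_def by auto
    have zIJ: "\<And>i j. i \<in> I \<Longrightarrow> j \<in> J \<Longrightarrow> z$i - z$j = 2" using zC unfolding CF_def by auto
    have wle: "w$k - w$l \<le> 2" for k l
    proof (cases "z$k - z$l = 2")
      case True
      then have "k \<in> I" "l \<in> J" using diff2_iff[OF p] zI zJ by auto
      then show ?thesis using wd[of k l] True yI by simp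
    next
      case False
      have a: "\<delta> \<le> 2 - (z$k - z$l)" using dle[OF False] .
      have "(z$k - z$l) - (y$k - y$l) \<le> 4" using pnorm_diff_le[of z k l] pnorm_diff_le[of y l k] p y
        unfolding CF_def by auto
      then have "(\<delta>/4) * ((z$k - z$l) - (y$k - y$l)) \<le> (\<delta>/4) * 4"
        using dpos by (intro mult_left_mono) auto
      then show ?thesis using wd[of k l] a by simp
    qed
    have "w \<in> CF I J" unfolding CF_def pnorm_le_iff using wle wd yI zIJ by auto
    moreover have "e > 1" unfolding e_def using dpos by simp
    ultimately show "\<exists>e>1. (1 - e) *\<^sub>R y + e *\<^sub>R z \<in> CF I J" unfolding w_def by blast
  qed
  then show "z \<in> rel_interior (CF I J)"
    using convex_rel_interior_iff[OF convex_CF CF_ne[OF t]] by blast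
qed

lemma ri_CF: "(I,J) \<in> types \<Longrightarrow> rel_interior (CF I J) = OF I J"
  using OF_sub_ri ri_CF_sub by blast




lemma inner_b: "(\<chi> k. (if k \<in> I then real (card J) else 0) - (if k \<in> J then real (card I) else 0)) \<bullet> (x::real^'n)
   = (\<Sum>p\<in>I\<times>J. x$fst p - x$snd p)"
proof -
  have "(\<chi> k. (if k \<in> I then real (card J) else 0) - (if k \<in> J then real (card I) else 0)) \<bullet> x
      = (\<Sum>k\<in>UNIV. (if k \<in> I then real (card J) * x$k else 0)) - (\<Sum>k\<in>UNIV. (if k \<in> J then real (card I) * x$k else 0))"
    unfolding inner_vec_def sum_subtractf[symmetric] by (intro sum.cong) (auto simp: algebra_simps)
  also have "\<dots> = real (card J) * (\<Sum>k\<in>I. x$k) - real (card I) * (\<Sum>k\<in>J. x$k)"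
    by (simp add: sum.If_cases sum_distrib_left)
  also have "\<dots> = (\<Sum>i\<in>I. \<Sum>j\<in>J. x$i - x$j)"
    by (simp add: sum_subtractf sum_distrib_left sum_distrib_right mult.commute sum.swap[of _ I J])
  also have "\<dots> = (\<Sum>p\<in>I\<times>J. x$fst p - x$snd p)"
    by (simp add: sum.cartesian_product split_def)
  finally show ?thesis .
qed

lemma face_CF: assumes t: "(I,J) \<in> types"
  shows "is_face (CF I J) (Pball :: (real^'n) set) \<and> CF I J \<noteq> Pball"
proof -
  have ne: "I \<noteq> {}" "J \<noteq> {}" using t unfolding types_def by auto
  define b :: "real^'n" where "b = (\<chi> k. (if k \<in> I then real (card J) else 0) - (if k \<in> J then real (card I) else 0))"
  define c where "c = 2 * real (card (I \<times> J))"
  have le: "b \<bullet> x \<le> c" if x: "x \<in> Pball" for x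
  proof -
    have "b \<bullet> x = (\<Sum>p\<in>I\<times>J. x$fst p - x$snd p)" unfolding b_def by (rule inner_b)
    also have "\<dots> \<le> (\<Sum>p\<in>I\<times>J. 2)" using x unfolding Pball_def pnorm_le_iff by (intro sum_mono) auto
    finally show ?thesis unfolding c_def by simp
  qed
  have eq: "CF I J = Pball \<inter> {x. b \<bullet> x = c}"
  proof (intro set_eqI iffI)
    fix x assume x: "x \<in> CF I J"
    have "b \<bullet> x = (\<Sum>p\<in>I\<times>J. x$fst p - x$snd p)" unfolding b_def by (rule inner_b)
    also have "\<dots> = (\<Sum>p\<in>I\<times>J. 2)" using x unfolding CF_def by (intro sum.cong) auto
    finally show "x \<in> Pball \<inter> {x. b \<bullet> x = c}" using x unfolding c_def CF_def Pball_def by auto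
  next
    fix x assume x: "x \<in> Pball \<inter> {x. b \<bullet> x = c}"
    define f where "f = (\<lambda>p::'n\<times>'n. 2 - (x$fst p - x$snd p))"
    have "(\<Sum>p\<in>I\<times>J. x$fst p - x$snd p) = (\<Sum>p\<in>I\<times>J. 2)"
      using x inner_b[of I J x] unfolding b_def c_def by simp
    then have s0: "sum f (I\<times>J) = 0" unfolding f_def by (simp add: sum_subtractf)
    have nn: "\<And>p. p \<in> I\<times>J \<Longrightarrow> 0 \<le> f p" using x unfolding f_def Pball_def pnorm_le_iff by auto
    have "\<forall>p\<in>I\<times>J. f p = 0" using sum_nonneg_eq_0_iff[of "I\<times>J" f, OF _ nn] s0 by simp
    then have "\<forall>p\<in>I\<times>J. 2 - (x$fst p - x$snd p) = 0" unfolding f_def by simp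
    then show "x \<in> CF I J" using x unfolding CF_def Pball_def by auto
  qed
  have "0 \<in> (Pball :: (real^'n) set)" unfolding Pball_def by (simp add: pnorm_le_iff)
  moreover have "(0 :: real^'n) \<notin> CF I J" using ne unfolding CF_def by auto
  ultimately have "CF I J \<noteq> Pball" by blast
  moreover have "is_face (CF I J) Pball" unfolding is_face_def using CF_ne[OF t] eq le by blast
  ultimately show ?thesis by blast
qed




lemma stepA:
  fixes M :: "real^'n^'n"
  assumes t: "(I,J) \<in> types" and x: "x \<in> OF I J" and y: "y \<in> CF I J"
    and ne: "\<And>v. pnorm (M *v v) \<le> pnorm v"
    and d: "(M *v x)$i - (M *v x)$j = 2"
  shows "(M *v y)$i - (M *v y)$j = 2"
proof -
  have "x \<in> rel_interior (CF I J)" using OF_sub_ri[OF t] x by blast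
  then obtain e where e: "e > 1" "(1 - e) *\<^sub>R y + e *\<^sub>R x \<in> CF I J"
    using y convex_rel_interior_iff[OF convex_CF CF_ne[OF t]] by blast
  define w where "w = (1 - e) *\<^sub>R y + e *\<^sub>R x"
  have Mw: "M *v w = (1 - e) *\<^sub>R (M *v y) + e *\<^sub>R (M *v x)"
    unfolding w_def by (simp add: matrix_vector_right_distrib matrix_vector_mult_scaleR)
  have "pnorm (M *v w) \<le> 1" using ne[of w] e(2) unfolding w_def CF_def by auto
  then have "(M *v w)$i - (M *v w)$j \<le> 2" using pnorm_diff_le[of "M *v w" i j] by linarith
  then have "(1 - e) * ((M *v y)$i - (M *v y)$j) + e * 2 \<le> 2" using d unfolding Mw by (simp add: algebra_simps)
  then have "(e - 1) * (2 - ((M *v y)$i - (M *v y)$j)) \<le> 0" by (simp add: algebra_simps)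
  then have "2 - ((M *v y)$i - (M *v y)$j) \<le> 0" using e(1) by (simp add: mult_le_0_iff)
  moreover have "pnorm (M *v y) \<le> 1" using ne[of y] y unfolding CF_def by auto
  ultimately show ?thesis using pnorm_diff_le[of "M *v y" i j] by linarith
qed

lemma face_map:
  fixes M :: "real^'n^'n"
  assumes t: "(I,J) \<in> types" and x: "x \<in> OF I J" and y: "y \<in> OF I J"
    and ne: "\<And>v. pnorm (M *v v) \<le> pnorm v"
    and p: "pnorm (M *v x) = 1"
  shows "M *v y \<in> OF (amx (M *v x)) (amn (M *v x))"
proof -
  have A: "\<And>i j. (M *v x)$i - (M *v x)$j = 2 \<Longrightarrow> (M *v y)$i - (M *v y)$j = 2"
    using stepA[OF t x OF_CF[OF y] ne] by blast
  have B: "\<And>i j. (M *v y)$i - (M *v y)$j = 2 \<Longrightarrow> (M *v x)$i - (M *v x)$j = 2"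
    using stepA[OF t y OF_CF[OF x] ne] by blast
  obtain i j where "(M *v x)$i - (M *v x)$j = 2" using pnorm_attain[of "M *v x"] p by auto
  then have d: "(M *v y)$i - (M *v y)$j = 2" by (rule A)
  have "pnorm (M *v y) \<le> 1" using ne[of y] y unfolding OF_def by auto
  then have py: "pnorm (M *v y) = 1" using d pnorm_diff_le[of "M *v y" i j] by linarith
  have "amx (M *v y) = amx (M *v x)" "amn (M *v y) = amn (M *v x)"
    unfolding amx_def amn_def using A B by blast+
  then show ?thesis using py unfolding OF_def by auto
qed




primrec prodM :: "(nat \<Rightarrow> real^'n^'n) \<Rightarrow> nat \<Rightarrow> real^'n^'n" where
  "prodM \<sigma> 0 = mat 1"
| "prodM \<sigma> (Suc t) = \<sigma> t ** prodM \<sigma> t"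

lemma traj_prod: "traj \<sigma> x t = prodM \<sigma> t *v x"
  by (induction t) (simp_all add: matrix_vector_mul_assoc)

lemma traj_shift: "traj \<sigma> x (s + k) = traj (\<lambda>u. \<sigma> (s + u)) (traj \<sigma> x s) k"
  by (induction k) simp_all

lemma traj_cong: "(\<And>u. u < k \<Longrightarrow> \<sigma>1 u = \<sigma>2 u) \<Longrightarrow> traj \<sigma>1 x k = traj \<sigma>2 x k"
  by (induction k) simp_all

lemma traj_scale: "traj \<sigma> (c *\<^sub>R x) t = c *\<^sub>R traj \<sigma> x t"
  by (induction t) (simp_all add: matrix_vector_mult_scaleR)

lemma traj_neg: "traj \<sigma> (- x) t = - traj \<sigma> x t"
  using traj_scale[of \<sigma> "-1" x t] by simp

lemma traj_add: "traj \<sigma> (x + y) t = traj \<sigma> x t + traj \<sigma> y t"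
  by (induction t) (simp_all add: matrix_vector_right_distrib)

lemma traj_diff: "traj \<sigma> (x - y) t = traj \<sigma> x t - traj \<sigma> y t"
  by (induction t) (simp_all add: matrix_vector_mult_diff_distrib)

lemma traj_one:
  assumes "\<And>t. \<sigma> t *v vec 1 = vec 1"
  shows "traj \<sigma> (vec 1) t = vec 1"
  using assms by (induction t) simp_all

lemma traj_nonexp:
  assumes "\<And>t. \<forall>x. pnorm (\<sigma> t *v x) \<le> pnorm x"
  shows "pnorm (traj \<sigma> x t) \<le> pnorm x"
proof (induction t)
  case (Suc t)
  have "pnorm (\<sigma> t *v traj \<sigma> x t) \<le> pnorm (traj \<sigma> x t)" using assms[of t] by blast
  then show ?case using Suc by simp
qed simp

lemma traj_mono:
  assumes "\<And>t. \<forall>x. pnorm (\<sigma> t *v x) \<le> pnorm x" and "t \<le> t'"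
  shows "pnorm (traj \<sigma> x t') \<le> pnorm (traj \<sigma> x t)"
proof -
  obtain d where "t' = t + d" using assms(2) le_Suc_ex by blast
  then show ?thesis using traj_nonexp[of "\<lambda>u. \<sigma> (t + u)" "traj \<sigma> x t" d] assms(1)
    by (simp add: traj_shift)
qed

lemma Pball_CF: "Pball = CF {} {}"
  unfolding Pball_def CF_def by simp

lemma face_pnorm1:
  assumes f: "is_face F (Pball :: (real^'n) set)" and np: "F \<noteq> Pball" and x: "x \<in> F"
  shows "pnorm x = 1"
proof -
  obtain b c where bc: "\<forall>x\<in>Pball. b \<bullet> x \<le> c" "F = Pball \<inter> {x. b \<bullet> x = c}"
    using f np unfolding is_face_def by blast
  have xP: "pnorm x \<le> 1" "b \<bullet> x = c" using x bc(2) unfolding Pball_def by auto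
  show ?thesis
  proof (rule ccontr)
    assume "pnorm x \<noteq> 1"
    then have lt: "pnorm x < 1" using xP by simp
    show False
    proof (cases "b = 0")
      case True
      then have "c = 0" using xP by simp
      then have "F = Pball" using bc(2) True by auto
      then show False using np by simp
    next
      case False
      define t where "t = (1 - pnorm x) / (pnorm b + 1)"
      have pb: "0 \<le> pnorm b" by (rule pnorm_nonneg)
      have tpos: "t > 0" unfolding t_def using lt pb by simp
      have "pnorm (x + t *\<^sub>R b) \<le> pnorm x + t * pnorm b"
        using pnorm_triangle[of x "t *\<^sub>R b"] pnorm_scale[of t b] tpos by simp
      also have "t * pnorm b \<le> 1 - pnorm x"
      proof -
        have "t * pnorm b = (1 - pnorm x) * (pnorm b / (pnorm b + 1))" unfolding t_def by simp
        also have "\<dots> \<le> (1 - pnorm x) * 1" using lt pb by (intro mult_left_mono) auto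
        finally show ?thesis by simp
      qed
      then have "pnorm (x + t *\<^sub>R b) \<le> 1" using calculation by linarith
      then have "b \<bullet> (x + t *\<^sub>R b) \<le> c" using bc(1) unfolding Pball_def by auto
      moreover have "b \<bullet> (x + t *\<^sub>R b) = c + t * (b \<bullet> b)" using xP by (simp add: inner_add_right)
      moreover have "b \<bullet> b > 0" using False by simp
      ultimately have "t * (b \<bullet> b) \<le> 0" by linarith
      moreover have "t * (b \<bullet> b) > 0" using tpos \<open>b \<bullet> b > 0\<close> by (rule mult_pos_pos)
      ultimately show False by linarith
    qed
  qed
qed

lemma convex_face:
  assumes f: "is_face F (Pball :: (real^'n) set)"
  shows "convex F"
proof -
  have cP: "convex (Pball :: (real^'n) set)" unfolding Pball_CF by (rule convex_CF)
  from f consider "F = Pball" | b c where "F = Pball \<inter> {x. b \<bullet> x = c}" unfolding is_face_def by blast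
  then show ?thesis
  proof cases
    case 1 then show ?thesis using cP by simp
  next
    case 2 then show ?thesis by (simp only: convex_Int[OF cP convex_hyperplane])
  qed
qed

lemma dir2:
  fixes S :: "(real^'n^'n) set"
  assumes nonexp: "\<forall>A\<in>S. \<forall>x. pnorm (A *v x) \<le> pnorm x"
    and f: "is_face F (Pball :: (real^'n) set)" and np: "F \<noteq> Pball"
    and val: "\<forall>t. \<sigma> t \<in> S" and k: "1 \<le> k"
    and inc: "(\<lambda>x. traj \<sigma> x k) ` rel_interior F \<subseteq> rel_interior F \<union> uminus ` rel_interior F"
  shows "\<exists>x0 \<sigma>. (\<forall>t. \<sigma> t \<in> S) \<and> \<not> (\<exists>c::real. traj \<sigma> x0 \<longlonglongrightarrow> c *\<^sub>R vec 1)"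
proof -
  define R where "R = rel_interior F"
  have "F \<noteq> {}" using f unfolding is_face_def by blast
  then have "R \<noteq> {}" unfolding R_def using rel_interior_eq_empty convex_face[OF f] by blast
  then obtain x0 where x0: "x0 \<in> R" by blast
  define \<sigma>' where "\<sigma>' = (\<lambda>u. \<sigma> (u mod k))"
  have val': "\<forall>t. \<sigma>' t \<in> S" unfolding \<sigma>'_def using val by simp
  have inv: "traj \<sigma>' x0 (q * k) \<in> R \<union> uminus ` R" for q
  proof (induction q)
    case 0 then show ?case using x0 by simp
  next
    case (Suc q)
    define v where "v = traj \<sigma>' x0 (q * k)"
    have sq: "Suc q * k = q * k + k" by simp
    have "traj \<sigma>' x0 (Suc q * k) = traj (\<lambda>u. \<sigma>' (q * k + u)) v k"
      unfolding v_def by (simp only: sq traj_shift)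
    also have "\<dots> = traj \<sigma> v k"
      by (rule traj_cong) (simp add: \<sigma>'_def)
    finally have e: "traj \<sigma>' x0 (Suc q * k) = traj \<sigma> v k" .
    from Suc have "v \<in> R \<union> uminus ` R" unfolding v_def .
    then show ?case
    proof
      assume "v \<in> R" then show ?thesis using inc e unfolding R_def by auto
    next
      assume "v \<in> uminus ` R"
      then obtain w where w: "w \<in> R" "v = - w" by auto
      then have "traj \<sigma> w k \<in> R \<union> uminus ` R" using inc unfolding R_def by auto
      then have "- traj \<sigma> w k \<in> R \<union> uminus ` R"
      proof
        assume "traj \<sigma> w k \<in> R"
        then have "- traj \<sigma> w k \<in> uminus ` R" by (rule imageI)
        then show ?thesis by (rule UnI2)
      next
        assume "traj \<sigma> w k \<in> uminus ` R"
        then obtain u where "u \<in> R" "traj \<sigma> w k = - u" by blast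
        then show ?thesis by simp
      qed
      then show ?thesis using e w by (simp add: traj_neg)
    qed
  qed
  have RF: "R \<subseteq> F" unfolding R_def by (rule rel_interior_subset)
  have p1: "pnorm (traj \<sigma>' x0 (q * k)) = 1" for q
    using inv[of q] RF face_pnorm1[OF f np] by (auto simp: pnorm_neg)
  have "\<not> (\<exists>c::real. traj \<sigma>' x0 \<longlonglongrightarrow> c *\<^sub>R vec 1)"
  proof
    assume "\<exists>c::real. traj \<sigma>' x0 \<longlonglongrightarrow> c *\<^sub>R vec 1"
    then obtain c :: real where c: "traj \<sigma>' x0 \<longlonglongrightarrow> c *\<^sub>R vec 1" by blast
    have sm: "strict_mono (\<lambda>q::nat. q * k)" using k by (intro strict_monoI) simp
    have "(traj \<sigma>' x0 \<circ> (\<lambda>q. q * k)) \<longlonglongrightarrow> c *\<^sub>R vec 1" by (rule LIMSEQ_subseq_LIMSEQ[OF c sm])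
    then have "(\<lambda>q. pnorm ((traj \<sigma>' x0 \<circ> (\<lambda>q. q * k)) q)) \<longlonglongrightarrow> pnorm (c *\<^sub>R vec 1 :: real^'n)"
      by (rule pnorm_tendsto)
    then have "(\<lambda>q. 1::real) \<longlonglongrightarrow> 0" unfolding o_def p1 pnorm_const .
    then have "(1::real) = 0" by (simp add: LIMSEQ_const_iff)
    then show False by simp
  qed
  then show ?thesis using val' by blast
qed




definition D0 :: "('n set \<times> 'n set) set" where "D0 = {(I,J). I \<inter> J = {}}"

lemma card_D0: "card (D0 :: ('n::finite set \<times> 'n set) set) = 3 ^ CARD('n)"
proof -
  define P where "P = (PiE (UNIV::'n set) (\<lambda>_. {0,1,2::nat}))"
  define \<phi> where "\<phi> = (\<lambda>f::'n\<Rightarrow>nat. ({i. f i = 1}, {i. f i = 2}))"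
  have P: "P = {f. \<forall>i. f i \<in> {0,1,2}}" unfolding P_def PiE_UNIV_domain Pi_def by simp
  have "bij_betw \<phi> P (D0 :: ('n set \<times> 'n set) set)"
    unfolding bij_betw_def
  proof
    show "inj_on \<phi> P"
    proof (rule inj_onI)
      fix f g assume f: "f \<in> P" and g: "g \<in> P" and e: "\<phi> f = \<phi> g"
      have e1: "{i. f i = 1} = {i. g i = 1}" and e2: "{i. f i = 2} = {i. g i = 2}" using e unfolding \<phi>_def by auto
      show "f = g"
      proof
        fix i
        have "f i \<in> {0,1,2}" "g i \<in> {0,1,2}" using f g unfolding P by auto
        moreover have "f i = 1 \<longleftrightarrow> g i = 1" using e1 unfolding set_eq_iff mem_Collect_eq by blast
        moreover have "f i = 2 \<longleftrightarrow> g i = 2" using e2 unfolding set_eq_iff mem_Collect_eq by blast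
        ultimately show "f i = g i" by auto
      qed
    qed
  next
    show "\<phi> ` P = D0"
    proof (intro set_eqI iffI)
      fix p assume "p \<in> \<phi> ` P" then show "p \<in> D0" unfolding \<phi>_def D0_def by auto
    next
      fix p assume p: "p \<in> (D0 :: ('n set \<times> 'n set) set)"
      obtain I J where pIJ: "p = (I,J)" by (cases p)
      have dis: "I \<inter> J = {}" using p pIJ unfolding D0_def by auto
      define f where "f = (\<lambda>i::'n. if i \<in> I then 1 else if i \<in> J then 2 else (0::nat))"
      have "f \<in> P" unfolding P f_def by auto
      moreover have "\<phi> f = p" unfolding \<phi>_def f_def pIJ using dis by auto
      ultimately show "p \<in> \<phi> ` P" by blast
    qed
  qed
  then have "card (D0 :: ('n set \<times> 'n set) set) = card P" by (simp add: bij_betw_same_card)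
  also have "card P = 3 ^ CARD('n)" unfolding P_def by (simp add: card_PiE numeral_3_eq_3)
  finally show ?thesis .
qed

lemma card_types: "card (types :: ('n::finite set \<times> 'n set) set) = 3 ^ CARD('n) + 1 - 2 ^ (CARD('n) + 1)"
proof -
  define X where "X = {{}::'n set} \<times> (UNIV :: 'n set set)"
  define Y where "Y = (UNIV :: 'n set set) \<times> {{}::'n set}"
  have cU: "card (UNIV :: 'n set set) = 2 ^ CARD('n)" using card_Pow[of "UNIV::'n set"] by simp
  have cX: "card X = 2 ^ CARD('n)" unfolding X_def using cU by (simp add: card_cartesian_product)
  have cY: "card Y = 2 ^ CARD('n)" unfolding Y_def using cU by (simp add: card_cartesian_product)
  have XY: "X \<inter> Y = {({},{})}" unfolding X_def Y_def by auto
  have cXY: "card (X \<union> Y) + 1 = 2 * 2 ^ CARD('n)" using card_Un_Int[of X Y] cX cY XY by simp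
  have sub: "X \<union> Y \<subseteq> (D0 :: ('n set \<times> 'n set) set)" unfolding X_def Y_def D0_def by blast
  have T: "(types :: ('n set \<times> 'n set) set) = D0 - (X \<union> Y)"
  proof (rule set_eqI)
    fix p :: "'n set \<times> 'n set"
    show "p \<in> types \<longleftrightarrow> p \<in> D0 - (X \<union> Y)"
      by (cases p) (simp add: types_def X_def Y_def D0_def, blast)
  qed
  have "card (types :: ('n set \<times> 'n set) set) = card (D0 :: ('n set \<times> 'n set) set) - card (X \<union> Y)"
    unfolding T by (rule card_Diff_subset) (use sub in simp_all)
  moreover have "card (X \<union> Y) \<le> card (D0 :: ('n set \<times> 'n set) set)" using sub by (intro card_mono) auto
  ultimately show ?thesis using card_D0[where 'n='n] cXY by simp
qed

definition pairs :: "('n set \<times> 'n set) set set" where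
  "pairs = (\<lambda>p. {p, prod.swap p}) ` types"

lemma card_pairs: "card (types :: ('n::finite set \<times> 'n set) set) = 2 * card (pairs :: ('n set \<times> 'n set) set set)"
proof -
  have sw: "prod.swap p \<in> types" if "p \<in> (types :: ('n set \<times> 'n set) set)" for p
    using that by (cases p) (auto simp: types_def)
  have U: "\<Union> (pairs :: ('n set \<times> 'n set) set set) = types" unfolding pairs_def using sw by blast
  have pd: "pairwise disjnt (pairs :: ('n set \<times> 'n set) set set)"
  proof (rule pairwiseI)
    fix A B assume A: "A \<in> (pairs :: ('n set \<times> 'n set) set set)" and B: "B \<in> pairs" and AB: "A \<noteq> B"
    obtain p where p: "A = {p, prod.swap p}" using A unfolding pairs_def by auto
    obtain q where q: "B = {q, prod.swap q}" using B unfolding pairs_def by auto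
    show "disjnt A B"
    proof (rule ccontr)
      assume "\<not> disjnt A B"
      then obtain z where "z \<in> A" "z \<in> B" unfolding disjnt_def by blast
      then have "q = p \<or> q = prod.swap p" unfolding p q by (metis insert_iff singletonD swap_swap)
      then have "A = B" unfolding p q by auto
      then show False using AB by simp
    qed
  qed
  have c2: "card A = 2" if A: "A \<in> (pairs :: ('n set \<times> 'n set) set set)" for A
  proof -
    obtain p where p: "p \<in> types" "A = {p, prod.swap p}" using A unfolding pairs_def by (elim imageE) blast
    obtain I J where "p = (I,J)" by (cases p)
    then have "(I,J) \<in> types" "A = {(I,J), (J,I)}" using p by auto
    moreover then have "(I,J) \<noteq> (J,I)" unfolding types_def by auto
    ultimately show ?thesis by simp
  qed
  have "card (\<Union> (pairs :: ('n set \<times> 'n set) set set)) = sum card (pairs :: ('n set \<times> 'n set) set set)"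
    by (rule card_Union_disjoint[OF pd]) simp
  also have "\<dots> = sum (\<lambda>_. 2) (pairs :: ('n set \<times> 'n set) set set)" by (rule sum.cong) (simp_all add: c2)
  finally show ?thesis unfolding U by simp
qed

lemma card_pairs_N: "card (pairs :: ('n::finite set \<times> 'n set) set set) = (3 ^ CARD('n) + 1 - 2 ^ (CARD('n) + 1)) div 2"
  using card_pairs[where 'n='n] card_types[where 'n='n] by simp

definition tyof :: "real^'n \<Rightarrow> 'n set \<times> 'n set" where "tyof v = (amx v, amn v)"

lemma pigeon:
  fixes \<sigma> :: "nat \<Rightarrow> real^'n^'n"
  assumes ne: "\<And>t. \<forall>x. pnorm (\<sigma> t *v x) \<le> pnorm x"
    and px: "pnorm x = 1" and pN: "pnorm (traj \<sigma> x N) = 1"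
    and N: "N = card (pairs :: ('n set \<times> 'n set) set set)"
  shows "\<exists>s t. s < t \<and> t \<le> N \<and> (tyof (traj \<sigma> x t) = tyof (traj \<sigma> x s) \<or> tyof (traj \<sigma> x t) = prod.swap (tyof (traj \<sigma> x s)))"
proof -
  have p1: "pnorm (traj \<sigma> x t) = 1" if "t \<le> N" for t
  proof -
    have "pnorm (traj \<sigma> x N) \<le> pnorm (traj \<sigma> x t)" by (rule traj_mono[OF ne that])
    moreover have "pnorm (traj \<sigma> x t) \<le> pnorm (traj \<sigma> x 0)" by (rule traj_mono[OF ne]) simp
    ultimately show ?thesis using pN px by simp
  qed
  define h where "h = (\<lambda>t. {tyof (traj \<sigma> x t), prod.swap (tyof (traj \<sigma> x t))})"
  have "h ` {0..N} \<subseteq> pairs"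
  proof (rule image_subsetI)
    fix t assume "t \<in> {0..N}"
    then have "tyof (traj \<sigma> x t) \<in> types" using type_in[OF p1[of t]] by (simp add: tyof_def)
    then show "h t \<in> pairs" unfolding h_def pairs_def by (rule imageI)
  qed
  then have "card (h ` {0..N}) \<le> N" unfolding N by (intro card_mono) auto
  then have "\<not> inj_on h {0..N}" using card_image[of h "{0..N}"] by auto
  then obtain s t where st: "s \<in> {0..N}" "t \<in> {0..N}" "s \<noteq> t" "h s = h t" unfolding inj_on_def by blast
  have key: "tyof (traj \<sigma> x b) = tyof (traj \<sigma> x a) \<or> tyof (traj \<sigma> x b) = prod.swap (tyof (traj \<sigma> x a))"
    if "h a = h b" for a b
  proof -
    have "tyof (traj \<sigma> x b) \<in> h a" using that unfolding h_def by auto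
    then show ?thesis unfolding h_def by auto
  qed
  show ?thesis
  proof (cases "s < t")
    case True then show ?thesis using st key[of s t] by auto
  next
    case False
    then have "t < s" using st by simp
    then show ?thesis using st key[of t s] by auto
  qed
qed




lemma contr_step:
  fixes S :: "(real^'n^'n) set"
  assumes nonexp: "\<forall>A\<in>S. \<forall>x. pnorm (A *v x) \<le> pnorm x"
    and N: "N = card (pairs :: ('n set \<times> 'n set) set set)"
    and notii: "\<not> (\<exists>F \<sigma> k. is_face F (Pball :: (real^'n) set) \<and> F \<noteq> Pball \<and>
            (\<forall>t. \<sigma> t \<in> S) \<and> 1 \<le> k \<and> k \<le> N \<and>
            (\<lambda>x. traj \<sigma> x k) ` rel_interior F \<subseteq> rel_interior F \<union> uminus ` rel_interior F)"
    and val: "\<forall>t. \<sigma> t \<in> S" and px: "pnorm x = 1"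
  shows "pnorm (traj \<sigma> x N) < 1"
proof -
  have ne: "\<And>t. \<forall>x. pnorm (\<sigma> t *v x) \<le> pnorm x" using val nonexp by blast
  have le: "pnorm (traj \<sigma> x N) \<le> 1" using traj_nonexp[OF ne, where x=x and t=N] px by simp
  show ?thesis
  proof (rule ccontr)
    assume "\<not> pnorm (traj \<sigma> x N) < 1"
    then have pN: "pnorm (traj \<sigma> x N) = 1" using le by simp
    have p1: "pnorm (traj \<sigma> x t) = 1" if "t \<le> N" for t
    proof -
      have "pnorm (traj \<sigma> x N) \<le> pnorm (traj \<sigma> x t)" by (rule traj_mono[OF ne that])
      moreover have "pnorm (traj \<sigma> x t) \<le> pnorm (traj \<sigma> x 0)" by (rule traj_mono[OF ne]) simp
      ultimately show ?thesis using pN px by simp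
    qed
    obtain s t where st: "s < t" "t \<le> N"
      and ty: "tyof (traj \<sigma> x t) = tyof (traj \<sigma> x s) \<or> tyof (traj \<sigma> x t) = prod.swap (tyof (traj \<sigma> x s))"
      using pigeon[OF ne px pN N] by blast
    define xs where "xs = traj \<sigma> x s"
    define xt where "xt = traj \<sigma> x t"
    obtain I J where IJ: "tyof xs = (I,J)" by (cases "tyof xs")
    have ps: "pnorm xs = 1" unfolding xs_def using p1 st by simp
    have pt: "pnorm xt = 1" unfolding xt_def using p1 st by simp
    have t: "(I,J) \<in> types" using type_in[OF ps] IJ unfolding tyof_def by simp
    have xsO: "xs \<in> OF I J" using ps IJ unfolding OF_def tyof_def by simp
    define \<sigma>' where "\<sigma>' = (\<lambda>u. \<sigma> (s + u))"
    define k where "k = t - s"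
    define M where "M = prodM \<sigma>' k"
    have val': "\<forall>u. \<sigma>' u \<in> S" unfolding \<sigma>'_def using val by simp
    have ne': "\<And>u. \<forall>x. pnorm (\<sigma>' u *v x) \<le> pnorm x" using val' nonexp by blast
    have Mtraj: "\<And>v. M *v v = traj \<sigma>' v k" unfolding M_def by (simp add: traj_prod)
    have Mne: "\<And>v. pnorm (M *v v) \<le> pnorm v" unfolding Mtraj by (rule traj_nonexp[OF ne'])
    have Mxs: "M *v xs = xt" unfolding Mtraj xs_def xt_def \<sigma>'_def k_def
      using traj_shift[of \<sigma> x s "t - s"] st by simp
    have "(\<lambda>x. traj \<sigma>' x k) ` rel_interior (CF I J) \<subseteq> rel_interior (CF I J) \<union> uminus ` rel_interior (CF I J)"
    proof (rule image_subsetI)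
      fix y assume "y \<in> rel_interior (CF I J)"
      then have y: "y \<in> OF I J" using ri_CF[OF t] by simp
      have My: "M *v y \<in> OF (amx xt) (amn xt)" using face_map[OF t xsO y Mne] Mxs pt by simp
      from ty have "tyof xt = (I,J) \<or> tyof xt = (J,I)" unfolding xt_def xs_def[symmetric] IJ by simp
      then have "M *v y \<in> OF I J \<union> uminus ` OF I J"
      proof
        assume "tyof xt = (I,J)" then show ?thesis using My unfolding tyof_def by simp
      next
        assume "tyof xt = (J,I)"
        then have "M *v y \<in> OF J I" using My unfolding tyof_def by simp
        then have "- (M *v y) \<in> OF I J" using OF_neg by blast
        then have "- (- (M *v y)) \<in> uminus ` OF I J" by (rule imageI)
        then show ?thesis by simp
      qed
      then show "traj \<sigma>' y k \<in> rel_interior (CF I J) \<union> uminus ` rel_interior (CF I J)"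
        using ri_CF[OF t] Mtraj by simp
    qed
    moreover have "1 \<le> k" "k \<le> N" unfolding k_def using st by auto
    ultimately show False using notii face_CF[OF t] val' by blast
  qed
qed




lemma prodM_cong: "(\<And>u. u < k \<Longrightarrow> \<sigma>1 u = \<sigma>2 u) \<Longrightarrow> prodM \<sigma>1 k = prodM \<sigma>2 k"
  by (induction k) simp_all

lemma abs_comp_le: "\<bar>(x::real^'n)$i - x$j\<bar> \<le> 2 * pnorm x"
  using pnorm_diff_le[of x i j] pnorm_diff_le[of x j i] by linarith

lemma norm_shift_le: "norm ((x::real^'n) - x$i0 *\<^sub>R vec 1) \<le> 2 * real CARD('n) * pnorm x"
proof -
  have "norm (x - x$i0 *\<^sub>R vec 1) \<le> (\<Sum>i\<in>UNIV. \<bar>(x - x$i0 *\<^sub>R vec 1)$i\<bar>)" by (rule norm_le_l1_cart)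
  also have "\<dots> \<le> (\<Sum>i\<in>(UNIV::'n set). 2 * pnorm x)" by (intro sum_mono) (simp add: abs_comp_le)
  finally show ?thesis by simp
qed

lemma powdiv:
  fixes \<rho> :: real
  assumes r: "0 < \<rho>" "\<rho> < 1" and N: "N > 0"
  shows "\<rho> ^ (t div N) \<le> root N \<rho> ^ t / \<rho>"
proof -
  define r' where "r' = root N \<rho>"
  have r'pos: "0 < r'" unfolding r'_def using r N by (simp add: real_root_gt_zero)
  have r'1: "r' < 1" unfolding r'_def using r N by simp
  have rN: "r' ^ N = \<rho>" unfolding r'_def using r N by simp
  have "t = N * (t div N) + t mod N" by simp
  then have "r' ^ t = r' ^ (N * (t div N)) * r' ^ (t mod N)" by (metis power_add)
  also have "\<dots> = \<rho> ^ (t div N) * r' ^ (t mod N)" by (simp add: power_mult rN)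
  finally have e: "r' ^ t = \<rho> ^ (t div N) * r' ^ (t mod N)" .
  have "r' ^ N \<le> r' ^ (t mod N)" using N r'pos r'1 by (intro power_decreasing) auto
  then have "\<rho> ^ (t div N) * \<rho> \<le> \<rho> ^ (t div N) * r' ^ (t mod N)"
    using rN r by (intro mult_left_mono) auto
  then have "\<rho> ^ (t div N) * \<rho> \<le> r' ^ t" using e by simp
  then show ?thesis unfolding r'_def[symmetric] using r by (simp add: pos_le_divide_eq)
qed

lemma rho_exists:
  fixes S :: "(real^'n^'n) set"
  assumes n2: "CARD('n) \<ge> 2" and finS: "finite S"
    and stoch: "\<forall>A\<in>S. A *v vec 1 = vec 1"
    and nonexp: "\<forall>A\<in>S. \<forall>x. pnorm (A *v x) \<le> pnorm x"
    and contr: "\<And>\<sigma> x. \<forall>t. \<sigma> t \<in> S \<Longrightarrow> pnorm x = 1 \<Longrightarrow> pnorm (traj \<sigma> x N) < 1"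
  shows "\<exists>\<rho>. 0 < \<rho> \<and> \<rho> < 1 \<and> (\<forall>\<sigma>. (\<forall>t. \<sigma> t \<in> S) \<longrightarrow> (\<forall>x. pnorm (traj \<sigma> x N) \<le> \<rho> * pnorm x))"
proof -
  obtain i0 :: 'n where True by simp
  have "\<exists>j::'n. j \<noteq> i0"
  proof (rule ccontr)
    assume "\<not> (\<exists>j::'n. j \<noteq> i0)"
    then have U: "(UNIV :: 'n set) = {i0}" by auto
    have "card (UNIV :: 'n set) = card {i0}" by (subst U) (rule refl)
    then have "CARD('n) = 1" by simp
    with n2 show False by simp
  qed
  then obtain j0 :: 'n where j0: "j0 \<noteq> i0" by blast
  define K where "K = {x::real^'n. pnorm x = 1 \<and> x$i0 = 0}"
  have bK: "bounded K" unfolding bounded_iff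
  proof (intro exI ballI)
    fix x assume "x \<in> K"
    then have "norm (x - x$i0 *\<^sub>R vec 1) \<le> 2 * real CARD('n) * 1" and "x$i0 = 0"
      using norm_shift_le[of x i0] unfolding K_def by auto
    then show "norm x \<le> 2 * real CARD('n) * 1" by simp
  qed
  have cK: "closed K"
  proof -
    have "closed {x::real^'n. pnorm x = 1}" by (rule closed_Collect_eq[OF pnorm_cont continuous_on_const])
    moreover have "closed {x::real^'n. x$i0 = 0}"
      by (rule closed_Collect_eq[OF continuous_on_component[OF continuous_on_id] continuous_on_const])
    ultimately have "closed ({x::real^'n. pnorm x = 1} \<inter> {x::real^'n. x$i0 = 0})" by (rule closed_Int)
    moreover have "K = {x::real^'n. pnorm x = 1} \<inter> {x::real^'n. x$i0 = 0}" unfolding K_def by auto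
    ultimately show ?thesis by simp
  qed
  have compK: "compact K" using bK cK by (simp add: compact_eq_bounded_closed)
  define e0 :: "real^'n" where "e0 = (\<chi> i. if i = j0 then 2 else 0)"
  have "pnorm e0 = 1" by (rule pnorm_eqI[of _ _ j0 i0]) (use j0 in \<open>auto simp: e0_def\<close>)
  then have neK: "K \<noteq> {}" unfolding K_def e0_def using j0 by auto
  define Prods where "Prods = {prodM \<sigma> N | \<sigma>. \<forall>t. \<sigma> t \<in> S}"
  have finP: "finite Prods"
  proof -
    have sub: "Prods \<subseteq> (\<lambda>l. prodM (\<lambda>i. l ! i) N) ` {l. set l \<subseteq> S \<and> length l = N}"
    proof
      fix M assume "M \<in> Prods"
      then obtain \<sigma> where \<sigma>: "\<forall>t. \<sigma> t \<in> S" "M = prodM \<sigma> N" unfolding Prods_def by blast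
      have "M = prodM (\<lambda>i. map \<sigma> [0..<N] ! i) N" unfolding \<sigma>(2) by (rule prodM_cong) simp
      moreover have "map \<sigma> [0..<N] \<in> {l. set l \<subseteq> S \<and> length l = N}" using \<sigma>(1) by auto
      ultimately show "M \<in> (\<lambda>l. prodM (\<lambda>i. l ! i) N) ` {l. set l \<subseteq> S \<and> length l = N}" by blast
    qed
    have fl: "finite {l. set l \<subseteq> S \<and> length l = N}" by (rule finite_lists_length_eq[OF finS])
    show ?thesis by (rule finite_subset[OF sub finite_imageI[OF fl]])
  qed
  have "\<forall>M\<in>Prods. \<exists>r. r < 1 \<and> (\<forall>x\<in>K. pnorm (M *v x) \<le> r)"
  proof
    fix M assume "M \<in> Prods"
    then obtain \<sigma> where \<sigma>: "\<forall>t. \<sigma> t \<in> S" "M = prodM \<sigma> N" unfolding Prods_def by blast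
    have "continuous_on K (\<lambda>x. pnorm (M *v x))"
      by (rule continuous_on_compose2[OF pnorm_cont linear_continuous_on[OF matrix_vector_mul_bounded_linear]]) simp
    then obtain xm where xm: "xm \<in> K" "\<forall>y\<in>K. pnorm (M *v y) \<le> pnorm (M *v xm)"
      using continuous_attains_sup[OF compK neK] by blast
    have "pnorm (M *v xm) < 1" using contr[OF \<sigma>(1), of xm] xm(1) unfolding K_def \<sigma>(2) traj_prod by simp
    then show "\<exists>r. r < 1 \<and> (\<forall>x\<in>K. pnorm (M *v x) \<le> r)" using xm by blast
  qed
  then obtain r where r: "\<forall>M\<in>Prods. r M < 1 \<and> (\<forall>x\<in>K. pnorm (M *v x) \<le> r M)" by (metis bchoice)
  define \<rho> where "\<rho> = Max (insert (1/2) (r ` Prods))"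
  have fin: "finite (insert (1/2) (r ` Prods))" using finP by simp
  have \<rho>ge1: "1/2 \<le> \<rho>" unfolding \<rho>_def by (rule Max_ge[OF fin]) simp
  have \<rho>ge2: "r M \<le> \<rho>" if "M \<in> Prods" for M unfolding \<rho>_def by (rule Max_ge[OF fin]) (simp add: that)
  note \<rho>ge = \<rho>ge1 \<rho>ge2
  have \<rho>lt: "\<rho> < 1" unfolding \<rho>_def using fin r by (subst Max_less_iff) auto
  have main: "pnorm (traj \<sigma> x N) \<le> \<rho> * pnorm x" if \<sigma>: "\<forall>t. \<sigma> t \<in> S" for \<sigma> x
  proof -
    define M where "M = prodM \<sigma> N"
    have MP: "M \<in> Prods" unfolding Prods_def M_def using \<sigma> by blast
    have ne: "\<And>t. \<forall>x. pnorm (\<sigma> t *v x) \<le> pnorm x" using \<sigma> nonexp by blast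
    have M1: "M *v vec 1 = vec 1" unfolding M_def traj_prod[symmetric] by (rule traj_one) (use \<sigma> stoch in blast)
    have Mx: "traj \<sigma> x N = M *v x" unfolding M_def by (rule traj_prod)
    define p where "p = pnorm x"
    show ?thesis
    proof (cases "p = 0")
      case True
      then show ?thesis using traj_nonexp[OF ne, where x=x and t=N] unfolding p_def by simp
    next
      case False
      then have pp: "p > 0" using pnorm_nonneg[of x] unfolding p_def by simp
      define y where "y = (1/p) *\<^sub>R (x + (- x$i0) *\<^sub>R vec 1)"
      have "pnorm y = 1" unfolding y_def pnorm_scale pnorm_shift using pp unfolding p_def by simp
      moreover have "y$i0 = 0" unfolding y_def by simp
      ultimately have yK: "y \<in> K" unfolding K_def by simp
      have "M *v y = (1/p) *\<^sub>R (M *v x + (- x$i0) *\<^sub>R (M *v vec 1))" unfolding y_def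
        by (simp only: matrix_vector_mult_scaleR matrix_vector_right_distrib)
      then have "M *v y = (1/p) *\<^sub>R (M *v x + (- x$i0) *\<^sub>R vec 1)" by (simp only: M1)
      then have "pnorm (M *v y) = \<bar>1/p\<bar> * pnorm (M *v x)" by (simp only: pnorm_scale pnorm_shift)
      then have "pnorm (M *v y) = (1/p) * pnorm (M *v x)" using pp by simp
      moreover have "pnorm (M *v y) \<le> r M" using r MP yK by blast
      then have "pnorm (M *v y) \<le> \<rho>" using \<rho>ge(2)[OF MP] by linarith
      ultimately have "(1/p) * pnorm (M *v x) \<le> \<rho>" by linarith
      then have "pnorm (M *v x) \<le> \<rho> * p" using pp by (simp add: field_simps)
      then show ?thesis unfolding Mx p_def .
    qed
  qed
  show ?thesis using \<rho>ge(1) \<rho>lt main by (intro exI[of _ \<rho>]) auto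
qed




lemma Cbound:
  fixes S :: "(real^'n^'n) set"
  assumes finS: "finite S" and stoch: "\<forall>A\<in>S. A *v vec 1 = vec 1"
  shows "\<exists>C\<ge>0. \<forall>A\<in>S. \<forall>x. norm (A *v x - x) \<le> C * pnorm x"
proof -
  obtain i0 :: 'n where True by simp
  have "\<forall>A\<in>S. \<exists>C. C \<ge> 0 \<and> (\<forall>x. norm (A *v x - x) \<le> C * pnorm x)"
  proof
    fix A assume A: "A \<in> S"
    obtain B where B: "B > 0" "\<And>v. norm (A *v v) \<le> norm v * B"
      using bounded_linear.pos_bounded[OF matrix_vector_mul_bounded_linear[of A]] by blast
    define C where "C = (B + 1) * (2 * real CARD('n))"
    have "norm (A *v x - x) \<le> C * pnorm x" for x
    proof -
      define v where "v = x - x$i0 *\<^sub>R vec 1"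
      have "A *v v = A *v x - x$i0 *\<^sub>R (A *v vec 1)" unfolding v_def
        by (simp only: matrix_vector_mult_diff_distrib matrix_vector_mult_scaleR)
      then have "A *v v = A *v x - x$i0 *\<^sub>R vec 1" using A stoch by simp
      then have e: "A *v x - x = A *v v - v" unfolding v_def by simp
      have "norm (A *v v - v) \<le> norm (A *v v) + norm v" by (rule norm_triangle_ineq4)
      also have "\<dots> \<le> norm v * B + norm v" using B(2)[of v] by simp
      also have "\<dots> = (B + 1) * norm v" by (simp add: algebra_simps)
      also have "\<dots> \<le> (B + 1) * (2 * real CARD('n) * pnorm x)"
        using norm_shift_le[of x i0] B(1) unfolding v_def by (intro mult_left_mono) auto
      finally show ?thesis unfolding e C_def by (simp add: algebra_simps)
    qed
    moreover have "C \<ge> 0" unfolding C_def using B(1) by simp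
    ultimately show "\<exists>C. C \<ge> 0 \<and> (\<forall>x. norm (A *v x - x) \<le> C * pnorm x)" by blast
  qed
  then obtain c where c: "\<forall>A\<in>S. c A \<ge> 0 \<and> (\<forall>x. norm (A *v x - x) \<le> c A * pnorm x)" by (metis bchoice)
  define C where "C = Max (insert 0 (c ` S))"
  have fin: "finite (insert 0 (c ` S))" using finS by simp
  have C0: "C \<ge> 0" unfolding C_def by (rule Max_ge[OF fin]) simp
  have Cc: "c A \<le> C" if "A \<in> S" for A unfolding C_def by (rule Max_ge[OF fin]) (simp add: that)
  have "norm (A *v x - x) \<le> C * pnorm x" if "A \<in> S" for A x
  proof -
    have "norm (A *v x - x) \<le> c A * pnorm x" using c that by blast
    also have "\<dots> \<le> C * pnorm x" using Cc[OF that] pnorm_nonneg[of x] by (rule mult_right_mono)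
    finally show ?thesis .
  qed
  then show ?thesis using C0 by blast
qed

lemma converge:
  fixes S :: "(real^'n^'n) set"
  assumes n2: "CARD('n) \<ge> 2" and finS: "finite S"
    and stoch: "\<forall>A\<in>S. A *v vec 1 = vec 1"
    and nonexp: "\<forall>A\<in>S. \<forall>x. pnorm (A *v x) \<le> pnorm x"
    and Npos: "N > 0"
    and contr: "\<And>\<sigma> x. \<forall>t. \<sigma> t \<in> S \<Longrightarrow> pnorm x = 1 \<Longrightarrow> pnorm (traj \<sigma> x N) < 1"
    and val: "\<forall>t. \<sigma> t \<in> S"
  shows "\<exists>c::real. traj \<sigma> x0 \<longlonglongrightarrow> c *\<^sub>R vec 1"
proof -
  obtain \<rho> where \<rho>: "0 < \<rho>" "\<rho> < 1"
    and step: "\<And>\<sigma> x. \<forall>t. \<sigma> t \<in> S \<Longrightarrow> pnorm (traj \<sigma> x N) \<le> \<rho> * pnorm x"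
    using rho_exists[OF n2 finS stoch nonexp contr] by blast
  obtain C where C: "C \<ge> 0" "\<And>A x. A \<in> S \<Longrightarrow> norm (A *v x - x) \<le> C * pnorm x"
    using Cbound[OF finS stoch] by blast
  have geo: "pnorm (traj \<sigma>1 x (q * N)) \<le> \<rho> ^ q * pnorm x" if "\<forall>t. \<sigma>1 t \<in> S" for q \<sigma>1 x
    using that
  proof (induction q arbitrary: \<sigma>1 x)
    case 0 then show ?case by simp
  next
    case (Suc q)
    have sq: "Suc q * N = q * N + N" by simp
    have v': "\<forall>t. (\<lambda>u. \<sigma>1 (q * N + u)) t \<in> S" using Suc.prems by simp
    have "pnorm (traj \<sigma>1 x (Suc q * N)) = pnorm (traj (\<lambda>u. \<sigma>1 (q * N + u)) (traj \<sigma>1 x (q * N)) N)"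
      by (simp only: sq traj_shift)
    also have "\<dots> \<le> \<rho> * pnorm (traj \<sigma>1 x (q * N))" by (rule step[OF v'])
    also have "\<dots> \<le> \<rho> * (\<rho> ^ q * pnorm x)" using Suc.IH[OF Suc.prems] \<rho>(1) by (intro mult_left_mono) auto
    finally show ?case by simp
  qed
  have ne: "\<And>t. \<forall>x. pnorm (\<sigma> t *v x) \<le> pnorm x" using val nonexp by blast
  define p0 where "p0 = pnorm x0"
  define r' where "r' = root N \<rho>"
  have r'pos: "0 < r'" unfolding r'_def using \<rho> Npos by (simp add: real_root_gt_zero)
  have r'1: "r' < 1" unfolding r'_def using \<rho> Npos by simp
  have p0: "p0 \<ge> 0" unfolding p0_def by (rule pnorm_nonneg)
  have bnd: "pnorm (traj \<sigma> x0 t) \<le> p0 / \<rho> * r' ^ t" for t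
  proof -
    have "pnorm (traj \<sigma> x0 t) \<le> pnorm (traj \<sigma> x0 ((t div N) * N))"
      by (rule traj_mono[OF ne]) simp
    also have "\<dots> \<le> \<rho> ^ (t div N) * p0" unfolding p0_def by (rule geo[OF val])
    also have "\<dots> \<le> (r' ^ t / \<rho>) * p0" unfolding r'_def
      using powdiv[OF \<rho> Npos, of t] p0 by (rule mult_right_mono)
    also have "\<dots> = p0 / \<rho> * r' ^ t" by (simp add: field_simps)
    finally show ?thesis .
  qed
  define d where "d = (\<lambda>t. traj \<sigma> x0 (Suc t) - traj \<sigma> x0 t)"
  have dn: "norm (d t) \<le> C * p0 / \<rho> * r' ^ t" for t
  proof -
    have "norm (d t) \<le> C * pnorm (traj \<sigma> x0 t)" unfolding d_def using C(2) val by simp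
    also have "\<dots> \<le> C * (p0 / \<rho> * r' ^ t)" using bnd[of t] C(1) by (rule mult_left_mono)
    finally show ?thesis by simp
  qed
  have sg: "summable (\<lambda>t. C * p0 / \<rho> * r' ^ t)"
    using r'pos r'1 by (intro summable_mult summable_geometric) simp
  have "summable (\<lambda>t. norm (d t))"
    by (rule summable_comparison_test'[OF sg, of 0]) (use dn in simp)
  then have sd: "summable d" by (rule summable_norm_cancel)
  have "(\<lambda>n. \<Sum>t<n. d t) \<longlonglongrightarrow> suminf d" by (rule summable_LIMSEQ[OF sd])
  moreover have "\<And>n. (\<Sum>t<n. d t) = traj \<sigma> x0 n - x0" unfolding d_def by (subst sum_lessThan_telescope) simp
  ultimately have "(\<lambda>n. traj \<sigma> x0 n - x0) \<longlonglongrightarrow> suminf d" by simp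
  then have "(\<lambda>n. x0 + (traj \<sigma> x0 n - x0)) \<longlonglongrightarrow> x0 + suminf d" by (intro tendsto_add tendsto_const)
  then have lim: "traj \<sigma> x0 \<longlonglongrightarrow> x0 + suminf d" by simp
  define y where "y = x0 + suminf d"
  have l1: "(\<lambda>n. pnorm (traj \<sigma> x0 n)) \<longlonglongrightarrow> pnorm y" unfolding y_def by (rule pnorm_tendsto[OF lim])
  have "(\<lambda>n. r' ^ n) \<longlonglongrightarrow> 0" by (rule LIMSEQ_power_zero) (use r'pos r'1 in simp)
  then have lh: "(\<lambda>n. p0 / \<rho> * r' ^ n) \<longlonglongrightarrow> p0 / \<rho> * 0" by (rule tendsto_mult_left)
  have ev1: "eventually (\<lambda>n. (0::real) \<le> pnorm (traj \<sigma> x0 n)) sequentially"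
    by (rule always_eventually) (simp add: pnorm_nonneg)
  have ev2: "eventually (\<lambda>n. pnorm (traj \<sigma> x0 n) \<le> p0 / \<rho> * r' ^ n) sequentially"
    by (rule always_eventually) (use bnd in blast)
  have l2: "(\<lambda>n. pnorm (traj \<sigma> x0 n)) \<longlonglongrightarrow> 0"
    using real_tendsto_sandwich[OF ev1 ev2 tendsto_const] lh by simp
  have py: "pnorm y = 0" using LIMSEQ_unique[OF l1 l2] .
  obtain i0 :: 'n where True by simp
  have yeq: "y = y$i0 *\<^sub>R vec 1"
  proof (subst vec_eq_iff, intro allI)
    fix i
    have "y$i - y$i0 \<le> 2 * pnorm y" "y$i0 - y$i \<le> 2 * pnorm y" by (rule pnorm_diff_le)+
    then have "y$i = y$i0" using py by linarith
    then show "y$i = (y$i0 *\<^sub>R vec 1)$i" by simp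
  qed
  have "traj \<sigma> x0 \<longlonglongrightarrow> y" using lim unfolding y_def .
  then have "traj \<sigma> x0 \<longlonglongrightarrow> y$i0 *\<^sub>R vec 1" by (subst yeq[symmetric])
  then show ?thesis by blast
qed




theorem proposition1:
  fixes S :: "(real^'n^'n) set"
  assumes n2: "CARD('n) \<ge> 2"
    and finS: "finite S"
    and stoch: "\<forall>A\<in>S. A *v vec 1 = vec 1"
    and nonexp: "\<forall>A\<in>S. \<forall>x. pnorm (A *v x) \<le> pnorm x"
  shows "(\<exists>x0 \<sigma>. (\<forall>t. \<sigma> t \<in> S) \<and>
            \<not> (\<exists>c::real. traj \<sigma> x0 \<longlonglongrightarrow> c *\<^sub>R vec 1))
     \<longleftrightarrow>
         (\<exists>F \<sigma> k. is_face F (Pball :: (real^'n) set) \<and> F \<noteq> Pball \<and>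
            (\<forall>t. \<sigma> t \<in> S) \<and>
            1 \<le> k \<and> k \<le> (3 ^ CARD('n) + 1 - 2 ^ (CARD('n) + 1)) div 2 \<and>
            (\<lambda>x. traj \<sigma> x k) ` rel_interior F
               \<subseteq> rel_interior F \<union> uminus ` rel_interior F)"
proof
  assume "\<exists>x0 \<sigma>. (\<forall>t. \<sigma> t \<in> S) \<and> \<not> (\<exists>c::real. traj \<sigma> x0 \<longlonglongrightarrow> c *\<^sub>R vec 1)"
  then obtain x0 \<sigma> where val: "\<forall>t. \<sigma> t \<in> S" and nc: "\<not> (\<exists>c::real. traj \<sigma> x0 \<longlonglongrightarrow> c *\<^sub>R vec 1)"
    by blast
  show "\<exists>F \<sigma> k. is_face F (Pball :: (real^'n) set) \<and> F \<noteq> Pball \<and>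
            (\<forall>t. \<sigma> t \<in> S) \<and>
            1 \<le> k \<and> k \<le> (3 ^ CARD('n) + 1 - 2 ^ (CARD('n) + 1)) div 2 \<and>
            (\<lambda>x. traj \<sigma> x k) ` rel_interior F
               \<subseteq> rel_interior F \<union> uminus ` rel_interior F"
  proof (rule ccontr)
    assume notii0: "\<not> (\<exists>F \<sigma> k. is_face F (Pball :: (real^'n) set) \<and> F \<noteq> Pball \<and>
            (\<forall>t. \<sigma> t \<in> S) \<and>
            1 \<le> k \<and> k \<le> (3 ^ CARD('n) + 1 - 2 ^ (CARD('n) + 1)) div 2 \<and>
            (\<lambda>x. traj \<sigma> x k) ` rel_interior F
               \<subseteq> rel_interior F \<union> uminus ` rel_interior F)"
    define N where "N = card (pairs :: ('n set \<times> 'n set) set set)"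
    have NE: "(3 ^ CARD('n) + 1 - 2 ^ (CARD('n) + 1)) div 2 = N"
      unfolding N_def by (rule card_pairs_N[symmetric])
    have notii: "\<not> (\<exists>F \<sigma> k. is_face F (Pball :: (real^'n) set) \<and> F \<noteq> Pball \<and>
            (\<forall>t. \<sigma> t \<in> S) \<and> 1 \<le> k \<and> k \<le> N \<and>
            (\<lambda>x. traj \<sigma> x k) ` rel_interior F \<subseteq> rel_interior F \<union> uminus ` rel_interior F)"
      using notii0 unfolding NE .
    have contr: "pnorm (traj \<sigma>1 x N) < 1" if "\<forall>t. \<sigma>1 t \<in> S" "pnorm x = 1" for \<sigma>1 x
      by (rule contr_step[OF nonexp N_def notii that])
    obtain i0 :: 'n where True by simp
    have "\<exists>j::'n. j \<noteq> i0"
    proof (rule ccontr)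
      assume "\<not> (\<exists>j::'n. j \<noteq> i0)"
      then have U: "(UNIV :: 'n set) = {i0}" by auto
      have "card (UNIV :: 'n set) = card {i0}" by (subst U) (rule refl)
      then have "CARD('n) = 1" by simp
      with n2 show False by simp
    qed
    then obtain j0 :: 'n where j0: "j0 \<noteq> i0" by blast
    have "({i0},{j0}) \<in> (types :: ('n set \<times> 'n set) set)" unfolding types_def using j0 by auto
    then have "{({i0},{j0}), prod.swap ({i0},{j0})} \<in> (pairs :: ('n set \<times> 'n set) set set)"
      unfolding pairs_def by (rule imageI)
    then have "(pairs :: ('n set \<times> 'n set) set set) \<noteq> {}" by blast
    then have Npos: "N > 0" unfolding N_def by (simp add: card_gt_0_iff)
    have "\<exists>c::real. traj \<sigma> x0 \<longlonglongrightarrow> c *\<^sub>R vec 1"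
      by (rule converge[OF n2 finS stoch nonexp Npos contr val]) auto
    then show False using nc by blast
  qed
next
  assume "\<exists>F \<sigma> k. is_face F (Pball :: (real^'n) set) \<and> F \<noteq> Pball \<and>
            (\<forall>t. \<sigma> t \<in> S) \<and>
            1 \<le> k \<and> k \<le> (3 ^ CARD('n) + 1 - 2 ^ (CARD('n) + 1)) div 2 \<and>
            (\<lambda>x. traj \<sigma> x k) ` rel_interior F
               \<subseteq> rel_interior F \<union> uminus ` rel_interior F"
  then obtain F \<sigma> k where f: "is_face F (Pball :: (real^'n) set)" and np: "F \<noteq> Pball"
    and val: "\<forall>t. \<sigma> t \<in> S" and k: "1 \<le> k"
    and inc: "(\<lambda>x. traj \<sigma> x k) ` rel_interior F \<subseteq> rel_interior F \<union> uminus ` rel_interior F"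
    by blast
  show "\<exists>x0 \<sigma>. (\<forall>t. \<sigma> t \<in> S) \<and> \<not> (\<exists>c::real. traj \<sigma> x0 \<longlonglongrightarrow> c *\<^sub>R vec 1)"
    by (rule dir2[OF nonexp f np val k inc])
qed


end
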